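(* Let $T$ be a tree with root edge whose leaves are $1,\dots,m$, and let $L:G\to\mathcal{L}$ be a labeling function on a finite abelian group $G$. Let $J_{T,L}$ be the kernel of the $\mathbb{C}$-algebra homomorphism $$\mathbb{C}[q_{g}: g=(g_1,\dots,g_m)\in G^m]\to\mathbb{C}[a^{(e)}_l: e\in E(T),\, l\in\mathcal{L}],\qquad q_{g}\mapsto\prod_{e\in E(T)}a^{(e)}_{L(h_g(e))}.$$ Then the $\mathbb{C}$-vector space of polynomials of degree at most one lying in $J_{T,L}$ is spanned by all differences $q_{g}-q_{g'}$ with $g,g'\in G^m$ such that $L(h_g(e))=L(h_{g'}(e))$ for all edges $e\in E(T)$.
   Context: Let $G$ be a finite abelian group written additively, $\mathcal{L}$ a finite set, and $L:G\to\mathcal{L}$ any function (a labeling function). A tree with root edge is a finite tree $T$ with a distinguished leaf $\rho$; the unique edge $e_r$ at $\rho$ is the root edge. Every vertex $v\neq\rho$ has a unique parent edge (the first edge on the path from $v$ to $\rho$); the other edges at $v$ are its child edges. The leaves of $T$ other than $\rho$ are called the leaves of $T$; vertices that are neither $\rho$ nor leaves are interior vertices. $E(T)$ is the edge set. An edge $e'$ is below an edge $e$ if $e$ lies on the path from $\rho$ to $e'$ (in particular $e$ is below $e$). For $g=(g_1,\dots,g_m)\in G^m$, define $h_g:E(T)\to G$ by $h_g(e)=\sum_{i\in\Lambda(e)}g_i$, where $\Lambda(e)$ is the set of leaves $i$ whose incident edge is below $e$. All $a^{(e)}_l$ are distinct indeterminates. *)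

theory Defs
  imports Complex_Main "HOL-Library.Poly_Mapping"
begin

definition adj :: "'v set set \<Rightarrow> 'v \<Rightarrow> 'v \<Rightarrow> bool" where
  "adj E u v \<longleftrightarrow> {u, v} \<in> E \<and> u \<noteq> v"

definition is_tree :: "'v set \<Rightarrow> 'v set set \<Rightarrow> bool" where
  "is_tree V E \<longleftrightarrow> finite V \<and> V \<noteq> {} \<and>
     (\<forall>e\<in>E. \<exists>u v. u \<in> V \<and> v \<in> V \<and> u \<noteq> v \<and> e = {u, v}) \<and>
     (\<forall>u\<in>V. \<forall>v\<in>V. (adj E)\<^sup>*\<^sup>* u v) \<and>
     card E + 1 = card V"

definition vdeg :: "'v set set \<Rightarrow> 'v \<Rightarrow> nat" where
  "vdeg E v = card {e \<in> E. v \<in> e}"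

text \<open>Tree with root edge: a tree with a distinguished leaf rho; the remaining leaves
  are bijectively labelled by the finite index type 'm (playing the role of 1..m).\<close>
definition tree_with_root_edge ::
  "'v set \<Rightarrow> 'v set set \<Rightarrow> 'v \<Rightarrow> ('m \<Rightarrow> 'v) \<Rightarrow> bool" where
  "tree_with_root_edge V E \<rho> lf \<longleftrightarrow> is_tree V E \<and> \<rho> \<in> V \<and> vdeg E \<rho> = 1 \<and>
     bij_betw lf UNIV {v \<in> V. v \<noteq> \<rho> \<and> vdeg E v = 1}"

definition simple_path :: "'v set set \<Rightarrow> 'v list \<Rightarrow> bool" where
  "simple_path E vs \<longleftrightarrow> vs \<noteq> [] \<and> distinct vs \<and>
     (\<forall>k. Suc k < length vs \<longrightarrow> {vs ! k, vs ! Suc k} \<in> E)"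

definition path_edges :: "'v list \<Rightarrow> 'v set set" where
  "path_edges vs = {{vs ! k, vs ! Suc k} | k. Suc k < length vs}"

text \<open>e' is below e iff e lies on the path from rho to e' (i.e. on a simple path starting
  at rho whose last edge is e').\<close>
definition below :: "'v set set \<Rightarrow> 'v \<Rightarrow> 'v set \<Rightarrow> 'v set \<Rightarrow> bool" where
  "below E \<rho> e' e \<longleftrightarrow> (\<exists>vs. simple_path E vs \<and> hd vs = \<rho> \<and> length vs \<ge> 2 \<and>
      {vs ! (length vs - 2), last vs} = e' \<and> e \<in> path_edges vs)"

definition leaf_edge :: "'v set set \<Rightarrow> 'v \<Rightarrow> 'v set" where
  "leaf_edge E v = (THE e. e \<in> E \<and> v \<in> e)"

definition Lambda :: "'v set set \<Rightarrow> 'v \<Rightarrow> ('m \<Rightarrow> 'v) \<Rightarrow> 'v set \<Rightarrow> 'm set" where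
  "Lambda E \<rho> lf e = {i. below E \<rho> (leaf_edge E (lf i)) e}"

definition hmap :: "'v set set \<Rightarrow> 'v \<Rightarrow> ('m \<Rightarrow> 'v) \<Rightarrow> ('m \<Rightarrow> 'g::comm_monoid_add) \<Rightarrow> 'v set \<Rightarrow> 'g" where
  "hmap E \<rho> lf g e = (\<Sum>i\<in>Lambda E \<rho> lf e. g i)"

type_synonym 'x cpoly = "('x \<Rightarrow>\<^sub>0 nat) \<Rightarrow>\<^sub>0 complex"

definition pvar :: "'x \<Rightarrow> 'x cpoly" where
  "pvar x = Poly_Mapping.single (Poly_Mapping.single x 1) 1"

definition pconst :: "complex \<Rightarrow> 'x cpoly" where
  "pconst c = Poly_Mapping.single 0 c"

definition total_degree :: "'x cpoly \<Rightarrow> nat" where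
  "total_degree p = Max (insert 0 ((\<lambda>mo. \<Sum>x\<in>Poly_Mapping.keys mo. Poly_Mapping.lookup mo x) ` Poly_Mapping.keys p))"

definition peval :: "('x \<Rightarrow> 'y cpoly) \<Rightarrow> 'x cpoly \<Rightarrow> 'y cpoly" where
  "peval img p = (\<Sum>mo\<in>Poly_Mapping.keys p. pconst (Poly_Mapping.lookup p mo) * (\<Prod>x\<in>Poly_Mapping.keys mo. img x ^ Poly_Mapping.lookup mo x))"

text \<open>q_g \<mapsto> prod over edges e of a^(e)_{L(h_g(e))}; variables a^(e)_l are pairs (e,l).\<close>
definition phiTL :: "'v set set \<Rightarrow> 'v \<Rightarrow> ('m \<Rightarrow> 'v) \<Rightarrow> ('g::comm_monoid_add \<Rightarrow> 'l)
    \<Rightarrow> ('m \<Rightarrow> 'g) cpoly \<Rightarrow> ('v set \<times> 'l) cpoly" where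
  "phiTL E \<rho> lf L = peval (\<lambda>g. \<Prod>e\<in>E. pvar (e, L (hmap E \<rho> lf g e)))"

definition J_TL :: "'v set set \<Rightarrow> 'v \<Rightarrow> ('m \<Rightarrow> 'v) \<Rightarrow> ('g::comm_monoid_add \<Rightarrow> 'l)
    \<Rightarrow> ('m \<Rightarrow> 'g) cpoly set" where
  "J_TL E \<rho> lf L = {p. phiTL E \<rho> lf L p = 0}"

end

theory Submission
  imports Defs
begin

lemma peval_superset:
  assumes "finite S" "Poly_Mapping.keys p \<subseteq> S"
  shows "peval img p = (\<Sum>mo\<in>S. pconst (Poly_Mapping.lookup p mo) * (\<Prod>x\<in>Poly_Mapping.keys mo. img x ^ Poly_Mapping.lookup mo x))"
  unfolding peval_def
  by (rule sum.mono_neutral_left[OF assms]) (auto simp: pconst_def in_keys_iff)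

lemma pconst_add: "pconst (a + b) = pconst a + pconst b"
  by (simp add: pconst_def single_add)
lemma pconst_diff: "pconst (a - b) = pconst a - pconst b"
  by (simp add: pconst_def single_diff)

lemma peval_add: "peval img (p + q) = peval img p + peval img q"
proof -
  let ?S = "Poly_Mapping.keys p \<union> Poly_Mapping.keys q"
  have f: "finite ?S" by simp
  show ?thesis
    apply (subst peval_superset[OF f keys_add])
    apply (subst peval_superset[OF f, of p], simp)
    apply (subst peval_superset[OF f, of q], simp)
    by (simp add: lookup_add pconst_add distrib_right sum.distrib)
qed

lemma keys_diff_sub: "Poly_Mapping.keys (p - q) \<subseteq> Poly_Mapping.keys p \<union> Poly_Mapping.keys q"
  by (auto simp: in_keys_iff lookup_minus)

lemma peval_diff: "peval img (p - q) = peval img p - peval img q"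
proof -
  let ?S = "Poly_Mapping.keys p \<union> Poly_Mapping.keys q"
  have f: "finite ?S" by simp
  show ?thesis
    apply (subst peval_superset[OF f keys_diff_sub])
    apply (subst peval_superset[OF f, of p], simp)
    apply (subst peval_superset[OF f, of q], simp)
    by (simp add: lookup_minus pconst_diff left_diff_distrib sum_subtractf)
qed

lemma peval_zero: "peval img 0 = 0"
  by (simp add: peval_def)

lemma peval_sum: "peval img (sum f A) = (\<Sum>x\<in>A. peval img (f x))"
  by (induction A rule: infinite_finite_induct) (auto simp: peval_zero peval_add)

lemma peval_monom: "peval img (Poly_Mapping.single (Poly_Mapping.single g 1) c) = pconst c * img g"
  by (cases "c = 0") (auto simp: peval_def pconst_def)

lemma pconst_mult_pvar: "pconst c * pvar g = Poly_Mapping.single (Poly_Mapping.single g 1) c"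
  by (simp add: pconst_def pvar_def mult_single)

lemma prod_single: "(\<Prod>x\<in>A. Poly_Mapping.single (f x) (1::complex)) = Poly_Mapping.single (sum f A) 1"
  by (induction A rule: infinite_finite_induct) (auto simp: mult_single)

lemma sum_single_lookup:
  assumes "finite E"
  shows "Poly_Mapping.lookup (\<Sum>e\<in>E. Poly_Mapping.single (e, f e) (1::nat)) (e0, l) = (if e0 \<in> E \<and> f e0 = l then 1 else 0)"
proof -
  have "Poly_Mapping.lookup (\<Sum>e\<in>E. Poly_Mapping.single (e, f e) (1::nat)) (e0, l)
      = (\<Sum>e\<in>E. if e = e0 then (if f e0 = l then 1 else 0) else 0)"
    unfolding lookup_sum by (rule sum.cong) (auto simp: lookup_single when_def)
  also have "\<dots> = (if e0 \<in> E \<and> f e0 = l then 1 else 0)"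
    using assms by (simp add: sum.delta')
  finally show ?thesis .
qed

lemma sum_single_eq_iff:
  assumes "finite E"
  shows "((\<Sum>e\<in>E. Poly_Mapping.single (e, f1 e) (1::nat)) = (\<Sum>e\<in>E. Poly_Mapping.single (e, f2 e) 1))
     \<longleftrightarrow> (\<forall>e\<in>E. f1 e = f2 e)"
proof
  assume h: "(\<Sum>e\<in>E. Poly_Mapping.single (e, f1 e) (1::nat)) = (\<Sum>e\<in>E. Poly_Mapping.single (e, f2 e) 1)"
  show "\<forall>e\<in>E. f1 e = f2 e"
  proof
    fix e assume "e \<in> E"
    from arg_cong[OF h, of "\<lambda>m. Poly_Mapping.lookup m (e, f1 e)"]
    have "Poly_Mapping.lookup (\<Sum>e\<in>E. Poly_Mapping.single (e, f1 e) (1::nat)) (e, f1 e) = Poly_Mapping.lookup (\<Sum>e\<in>E. Poly_Mapping.single (e, f2 e) (1::nat)) (e, f1 e)"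
      using h by simp
    then show "f1 e = f2 e" using \<open>e \<in> E\<close> unfolding sum_single_lookup[OF assms] by (simp split: if_splits)
  qed
qed (auto intro!: sum.cong)

lemma deg_le1:
  fixes mo :: "'x \<Rightarrow>\<^sub>0 nat"
  assumes "(\<Sum>x\<in>Poly_Mapping.keys mo. Poly_Mapping.lookup mo x) \<le> 1"
  shows "mo = 0 \<or> (\<exists>g. mo = Poly_Mapping.single g 1)"
proof (cases "Poly_Mapping.keys mo = {}")
  case True
  then have "mo = 0" by (intro poly_mapping_eqI) (auto simp: in_keys_iff)
  then show ?thesis by simp
next
  case False
  then obtain x where x: "x \<in> Poly_Mapping.keys mo" by blast
  have split: "(\<Sum>y\<in>Poly_Mapping.keys mo. Poly_Mapping.lookup mo y) = Poly_Mapping.lookup mo x + (\<Sum>y\<in>Poly_Mapping.keys mo - {x}. Poly_Mapping.lookup mo y)"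
    using x by (simp add: sum.remove)
  have lx: "Poly_Mapping.lookup mo x \<ge> 1" using x by (simp add: in_keys_iff)
  have rest: "\<forall>y\<in>Poly_Mapping.keys mo - {x}. False"
  proof
    fix y assume y: "y \<in> Poly_Mapping.keys mo - {x}"
    have "Poly_Mapping.lookup mo y \<le> (\<Sum>y\<in>Poly_Mapping.keys mo - {x}. Poly_Mapping.lookup mo y)"
      using y by (intro member_le_sum) auto
    moreover have "Poly_Mapping.lookup mo y \<ge> 1" using y by (simp add: in_keys_iff)
    ultimately show False using split lx assms by linarith
  qed
  then have k: "Poly_Mapping.keys mo = {x}" using x by blast
  then have "Poly_Mapping.lookup mo x = 1" using split assms lx by simp
  then have "mo = Poly_Mapping.single x 1"
    using k by (intro poly_mapping_eqI) (auto simp: lookup_single when_def in_keys_iff)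
  then show ?thesis by blast
qed

lemma tree_facts:
  assumes "tree_with_root_edge V E \<rho> lf"
  shows "finite E" "E \<noteq> {}"
proof -
  have t: "is_tree V E" and d: "vdeg E \<rho> = 1" using assms by (auto simp: tree_with_root_edge_def)
  have "E \<subseteq> Pow V" proof
    fix e assume "e \<in> E"
    with t obtain u v where "u \<in> V" "v \<in> V" "e = {u, v}" unfolding is_tree_def by meson
    then show "e \<in> Pow V" by auto
  qed
  moreover have "finite V" using t by (simp add: is_tree_def)
  ultimately show "finite E" by (meson finite_Pow_iff finite_subset)
  show "E \<noteq> {}" using d by (auto simp: vdeg_def)
qed

theorem proposition3p1:
  fixes V :: "'v set" and E :: "'v set set" and \<rho> :: 'v
    and lf :: "'m::finite \<Rightarrow> 'v"
    and L :: "'g::{ab_group_add, finite} \<Rightarrow> 'l::finite"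
  assumes "tree_with_root_edge V E \<rho> lf"
  defines "P \<equiv> {(g, g'). \<forall>e\<in>E. L (hmap E \<rho> lf g e) = L (hmap E \<rho> lf g' e)}"
  shows "{p \<in> J_TL E \<rho> lf L. total_degree p \<le> 1}
       = {p. \<exists>c :: ('m \<Rightarrow> 'g) \<times> ('m \<Rightarrow> 'g) \<Rightarrow> complex.
              p = (\<Sum>(g, g')\<in>P. pconst (c (g, g')) * (pvar g - pvar g'))}"
proof -
  note fE = tree_facts(1)[OF assms(1)] and nE = tree_facts(2)[OF assms(1)]
  define img where "img g = (\<Prod>e\<in>E. pvar (e, L (hmap E \<rho> lf g e)))" for g :: "'m \<Rightarrow> 'g"
  define mg where "mg g = (\<Sum>e\<in>E. Poly_Mapping.single (e, L (hmap E \<rho> lf g e)) (1::nat))" for g :: "'m \<Rightarrow> 'g"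
  have phi: "phiTL E \<rho> lf L = peval img" unfolding phiTL_def img_def by simp
  have img_mg: "img g = Poly_Mapping.single (mg g) 1" for g
    unfolding img_def mg_def pvar_def by (rule prod_single)
  have mg_eq: "mg g = mg g' \<longleftrightarrow> (g, g') \<in> P" for g g'
    unfolding mg_def P_def using sum_single_eq_iff[OF fE] by simp
  have mg_nz: "mg g \<noteq> 0" for g
  proof -
    obtain e0 where "e0 \<in> E" using nE by blast
    then have "Poly_Mapping.lookup (mg g) (e0, L (hmap E \<rho> lf g e0)) = 1"
      unfolding mg_def sum_single_lookup[OF fE] by simp
    then show ?thesis by auto
  qed
  have pc_diff: "pconst c * (pvar g - pvar g') = Poly_Mapping.single (Poly_Mapping.single g 1) c - Poly_Mapping.single (Poly_Mapping.single g' 1) c" for c g g'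
    by (simp add: right_diff_distrib pconst_mult_pvar)
  have sing_inj: "Poly_Mapping.single g (1::nat) = Poly_Mapping.single g' 1 \<longleftrightarrow> g = g'" for g g' :: "'m \<Rightarrow> 'g"
    by (metis lookup_single_eq lookup_single_not_eq zero_neq_one)
  have sing_inj': "Poly_Mapping.single g (Suc 0) = Poly_Mapping.single g' (Suc 0) \<longleftrightarrow> g = g'" for g g' :: "'m \<Rightarrow> 'g"
    using sing_inj by simp
  have sing_nz: "Poly_Mapping.single g (1::nat) \<noteq> 0" for g :: "'m \<Rightarrow> 'g"
    by (metis lookup_single_eq lookup_zero zero_neq_one)
  show ?thesis
  proof (intro set_eqI iffI)
    fix p assume "p \<in> {p \<in> J_TL E \<rho> lf L. total_degree p \<le> 1}"
    then have p0: "peval img p = 0" and pd: "total_degree p \<le> 1"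
      by (auto simp: J_TL_def phi)
    have degs: "mo = 0 \<or> (\<exists>g. mo = Poly_Mapping.single g 1)" if mo: "mo \<in> Poly_Mapping.keys p" for mo
    proof (rule deg_le1)
      have "(\<Sum>x\<in>Poly_Mapping.keys mo. Poly_Mapping.lookup mo x) \<le> total_degree p"
        unfolding total_degree_def by (rule Max_ge) (use mo in auto)
      then show "(\<Sum>x\<in>Poly_Mapping.keys mo. Poly_Mapping.lookup mo x) \<le> 1" using pd by linarith
    qed
    define S where "S = insert 0 (range (\<lambda>g::'m\<Rightarrow>'g. Poly_Mapping.single g (1::nat)))"
    have fS: "finite S" unfolding S_def by (intro finite.insertI finite_imageI finite_UNIV)
    have kS: "Poly_Mapping.keys p \<subseteq> S" unfolding S_def using degs by blast
    define a where "a g = Poly_Mapping.lookup p (Poly_Mapping.single g 1)" for g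
    define a0 where "a0 = Poly_Mapping.lookup p 0"
    have n0: "0 \<notin> range (\<lambda>g::'m\<Rightarrow>'g. Poly_Mapping.single g (1::nat))" using sing_nz by auto
    have injs: "inj (\<lambda>g::'m\<Rightarrow>'g. Poly_Mapping.single g (1::nat))" using sing_inj by (auto intro: injI)
    have phi_p: "peval img p = pconst a0 + (\<Sum>g\<in>UNIV. pconst (a g) * img g)"
    proof -
      let ?T = "\<lambda>mo. (\<Prod>x\<in>Poly_Mapping.keys mo. img x ^ Poly_Mapping.lookup mo x)"
      have "peval img p = (\<Sum>mo\<in>S. pconst (Poly_Mapping.lookup p mo) * ?T mo)"
        by (rule peval_superset[OF fS kS])
      also have "\<dots> = pconst (Poly_Mapping.lookup p 0) * ?T 0 + (\<Sum>mo\<in>range (\<lambda>g::'m\<Rightarrow>'g. Poly_Mapping.single g (1::nat)). pconst (Poly_Mapping.lookup p mo) * ?T mo)"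
        unfolding S_def by (rule sum.insert[OF _ n0]) (intro finite_imageI finite_UNIV)
      also have "(\<Sum>mo\<in>range (\<lambda>g::'m\<Rightarrow>'g. Poly_Mapping.single g (1::nat)). pconst (Poly_Mapping.lookup p mo) * ?T mo)
          = (\<Sum>g\<in>UNIV. pconst (Poly_Mapping.lookup p (Poly_Mapping.single g 1)) * ?T (Poly_Mapping.single g 1))"
        unfolding sum.reindex[OF injs] o_def by (rule refl)
      also have "\<dots> = (\<Sum>g\<in>UNIV. pconst (a g) * img g)"
        by (rule sum.cong) (simp_all add: a_def)
      also have "?T 0 = 1" by simp
      finally show ?thesis by (simp add: a0_def)
    qed
    have lk: "Poly_Mapping.lookup (peval img p) k = (if k = 0 then a0 else 0) + (\<Sum>g\<in>UNIV. if mg g = k then a g else 0)" for k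
      unfolding phi_p img_mg pconst_def mult_single lookup_add lookup_sum
      by (simp add: lookup_single when_def)
    have a00: "a0 = 0"
      using lk[of 0] mg_nz p0 by simp
    have cls: "(\<Sum>g\<in>{g. mg g = mg h}. a g) = 0" for h
    proof -
      have "(\<Sum>g\<in>UNIV. if mg g = mg h then a g else 0) = 0"
        using lk[of "mg h"] mg_nz[of h] p0 by simp
      then show ?thesis using sum.inter_filter[OF finite_UNIV, of a "\<lambda>g. mg g = mg h"] by simp
    qed
    have p_eq: "p = (\<Sum>g\<in>UNIV. Poly_Mapping.single (Poly_Mapping.single g 1) (a g))"
    proof (rule poly_mapping_eqI)
      fix mo
      show "Poly_Mapping.lookup p mo = Poly_Mapping.lookup (\<Sum>g\<in>UNIV. Poly_Mapping.single (Poly_Mapping.single g 1) (a g)) mo"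
      proof (cases "mo \<in> range (\<lambda>g::'m\<Rightarrow>'g. Poly_Mapping.single g (1::nat))")
        case True
        then obtain g0 where g0: "mo = Poly_Mapping.single g0 1" by blast
        have "Poly_Mapping.lookup (\<Sum>g\<in>UNIV. Poly_Mapping.single (Poly_Mapping.single g 1) (a g)) mo
            = (\<Sum>g\<in>UNIV. if g = g0 then a g else 0)"
          unfolding lookup_sum g0 by (rule sum.cong) (auto simp: lookup_single when_def sing_inj sing_inj')
        also have "\<dots> = a g0" by simp
        finally show ?thesis by (simp add: a_def g0)
      next
        case False
        have "Poly_Mapping.lookup p mo = 0"
        proof (cases "mo = 0")
          case True then show ?thesis using a00 by (simp add: a0_def)
        next
          case False
          have "mo \<notin> Poly_Mapping.keys p"
          proof
            assume "mo \<in> Poly_Mapping.keys p"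
            from degs[OF this] show False using False \<open>mo \<notin> range _\<close> by blast
          qed
          then show ?thesis by (simp add: in_keys_iff)
        qed
        moreover have "Poly_Mapping.lookup (\<Sum>g\<in>UNIV. Poly_Mapping.single (Poly_Mapping.single g 1) (a g)) mo = 0"
          unfolding lookup_sum by (rule sum.neutral) (use False in \<open>auto simp: lookup_single when_def\<close>)
        ultimately show ?thesis by simp
      qed
    qed
    define r where "r g = (SOME h. mg h = mg g)" for g
    have r_mg: "mg (r g) = mg g" for g unfolding r_def by (rule someI[of _ g]) simp
    have r_cong: "mg g = mg g' \<Longrightarrow> r g = r g'" for g g' unfolding r_def by simp
    define c where "c x = (if snd x = r (fst x) then a (fst x) else 0)" for x
    have "(\<Sum>(g, g')\<in>P. pconst (c (g, g')) * (pvar g - pvar g'))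
        = (\<Sum>x\<in>(\<lambda>g. (g, r g)) ` UNIV. (case x of (g, g') \<Rightarrow> pconst (c (g, g')) * (pvar g - pvar g')))"
    proof (rule sum.mono_neutral_right)
      show "finite P" by simp
      show "(\<lambda>g. (g, r g)) ` UNIV \<subseteq> P" using r_mg mg_eq by (auto simp: eq_commute)
      show "\<forall>x\<in>P - (\<lambda>g. (g, r g)) ` UNIV. (case x of (g, g') \<Rightarrow> pconst (c (g, g')) * (pvar g - pvar g')) = 0"
        by (auto simp: c_def pconst_def)
    qed
    also have "\<dots> = (\<Sum>g\<in>UNIV. pconst (a g) * (pvar g - pvar (r g)))"
      by (subst sum.reindex) (auto intro: injI simp: c_def)
    also have "\<dots> = (\<Sum>g\<in>UNIV. Poly_Mapping.single (Poly_Mapping.single g 1) (a g))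
        - (\<Sum>g\<in>UNIV. Poly_Mapping.single (Poly_Mapping.single (r g) (1::nat)) (a g))"
      by (simp add: pc_diff sum_subtractf)
    also have "(\<Sum>g\<in>UNIV. Poly_Mapping.single (Poly_Mapping.single (r g) (1::nat)) (a g)) = 0"
    proof (rule poly_mapping_eqI)
      fix mo
      have "Poly_Mapping.lookup (\<Sum>g\<in>UNIV. Poly_Mapping.single (Poly_Mapping.single (r g) (1::nat)) (a g)) mo
          = (\<Sum>g\<in>{g. Poly_Mapping.single (r g) (1::nat) = mo}. a g)"
        unfolding lookup_sum using sum.inter_filter[OF finite_UNIV, of a "\<lambda>g. Poly_Mapping.single (r g) (1::nat) = mo"] by (simp add: lookup_single when_def)
      also have "\<dots> = 0"
      proof (cases "{g. Poly_Mapping.single (r g) (1::nat) = mo} = {}")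
        case False
        then obtain g0 where g0: "Poly_Mapping.single (r g0) (1::nat) = mo" by blast
        have "{g. Poly_Mapping.single (r g) (1::nat) = mo} = {g. mg g = mg g0}"
        proof (rule Collect_cong, rule iffI)
          fix g assume "Poly_Mapping.single (r g) (1::nat) = mo"
          then have "r g = r g0" using g0 sing_inj by metis
          then show "mg g = mg g0" using r_mg by metis
        next
          fix g assume "mg g = mg g0"
          then show "Poly_Mapping.single (r g) (1::nat) = mo" using g0 r_cong by metis
        qed
        then show ?thesis using cls by simp
      qed simp
      finally show "Poly_Mapping.lookup (\<Sum>g\<in>UNIV. Poly_Mapping.single (Poly_Mapping.single (r g) (1::nat)) (a g)) mo = Poly_Mapping.lookup 0 mo" by simp
    qed
    finally have "(\<Sum>(g, g')\<in>P. pconst (c (g, g')) * (pvar g - pvar g')) = p" using p_eq by simp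
    then show "p \<in> {p. \<exists>c. p = (\<Sum>(g, g')\<in>P. pconst (c (g, g')) * (pvar g - pvar g'))}" by auto
  next
    fix p assume "p \<in> {p. \<exists>c. p = (\<Sum>(g, g')\<in>P. pconst (c (g, g')) * (pvar g - pvar g'))}"
    then obtain c where pc: "p = (\<Sum>(g, g')\<in>P. pconst (c (g, g')) * (pvar g - pvar g'))" by blast
    have "peval img p = (\<Sum>x\<in>P. peval img (case x of (g, g') \<Rightarrow> pconst (c (g, g')) * (pvar g - pvar g')))"
      unfolding pc by (rule peval_sum)
    also have "\<dots> = (\<Sum>x\<in>P. 0)"
    proof (rule sum.cong)
      fix x assume "x \<in> P"
      then obtain g g' where x: "x = (g, g')" and "(g, g') \<in> P" by (cases x) auto
      then have "img g = img g'" unfolding img_def P_def by (auto intro!: prod.cong)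
      then show "peval img (case x of (g, g') \<Rightarrow> pconst (c (g, g')) * (pvar g - pvar g')) = 0"
        unfolding x prod.case pc_diff peval_diff peval_monom by simp
    qed simp
    finally have "peval img p = 0" by simp
    moreover have "total_degree p \<le> 1"
    proof -
      have "Poly_Mapping.keys p \<subseteq> range (\<lambda>g. Poly_Mapping.single g 1)"
      proof
        fix mo assume mo: "mo \<in> Poly_Mapping.keys p"
        show "mo \<in> range (\<lambda>g. Poly_Mapping.single g 1)"
        proof (rule ccontr)
          assume nr: "mo \<notin> range (\<lambda>g. Poly_Mapping.single g 1)"
          have "Poly_Mapping.lookup p mo = 0"
            unfolding pc lookup_sum
            by (rule sum.neutral) (use nr in \<open>auto simp: pc_diff lookup_minus lookup_single when_def\<close>)
          then show False using mo by (simp add: in_keys_iff)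
        qed
      qed
      then show ?thesis
        unfolding total_degree_def by (subst Max_le_iff) auto
    qed
    ultimately show "p \<in> {p \<in> J_TL E \<rho> lf L. total_degree p \<le> 1}"
      by (simp add: J_TL_def phi)
  qed
qed

end
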